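(* Under Assumption 1 and the FP-UCB algorithm, for every arm $i\in A\setminus C(\theta^o)$ with $i\ne a^*(\theta^o)$, there is a constant $C_i$, depending only on $|A|$ and on the means $(\mu_j(\theta))_{j\in[L],\theta\in\Theta}$ and not on $T$, such that $\mathbb{E}[n_i(T)]\le C_i$ for all $T$.
   Context: Setting: there are $L$ arms $[L]=\{1,\dots,L\}$ and a known finite parameter set $\Theta$. For each $\theta\in\Theta$ and arm $i$, $P_i(\cdot;\theta)$ is a known probability distribution supported on $[0,1]$ with known mean $\mu_i(\theta)$. An unknown true parameter $\theta^o\in\Theta$ governs the rewards: the reward $X_i(\tau)$ from the $\tau$-th pull of arm $i$ is drawn from $P_i(\cdot;\theta^o)$; rewards of a given arm are i.i.d. and independent across arms. At each time $t=1,\dots,T$ the agent picks an arm $a(t)$ based on past observations. Let $a^*(\theta)=\arg\max_{i\in[L]}\mu_i(\theta)$. Assumption 1: for every $\theta\in\Theta$ the maximizer $a^*(\theta)$ is unique. Logarithms are natural. Notation: $n_i(t)=\sum_{\tau=1}^t \mathbb{1}\{a(\tau)=i\}$; $\hat\mu_i(t)=\frac{1}{n_i(t)}\sum_{\tau=1}^{n_i(t)}X_i(\tau)$; $A=\{a^*(\theta):\theta\in\Theta\}$; $B(\theta^o)=\{\theta\in\Theta: a^*(\theta)\ne a^*(\theta^o)\text{ and } \mu_{a^*(\theta^o)}(\theta^o)=\mu_{a^*(\theta^o)}(\theta)\}$; $C(\theta^o)=\{a^*(\theta):\theta\in B(\theta^o)\}$. FP-UCB algorithm: at times $t=1,\dots,|A|$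 select each arm of $A$ once. Then set episode counter $k=1$, $t=|A|+1$, and while $t\le T$: let $t_k=t-1$ and compute $A_k=\{a^*(\theta):\theta\in\Theta,\ \forall i\in A,\ |\hat\mu_i(t_k)-\mu_i(\theta)|\le\sqrt{3\log(k)/n_i(t_k)}\}$; if $A_k\ne\varnothing$, select each arm of $A_k$ once ($t\leftarrow t+|A_k|$), otherwise select each arm of $A$ once ($t\leftarrow t+|A|$); then $k\leftarrow k+1$. (Pulls beyond time $T$ are discarded.) *)

theory Defs
  imports "HOL-Probability.Probability"
begin

text \<open>Arms are the naturals 1..L; parameters have an arbitrary type 'p;
  mu j th is the (known) mean of arm j under parameter th.\<close>

definition arms :: "nat \<Rightarrow> nat set" where
  "arms L = {1..L}"

text \<open>The (unique under Assumption 1) best arm under parameter th.\<close>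
definition astar :: "nat \<Rightarrow> (nat \<Rightarrow> 'p \<Rightarrow> real) \<Rightarrow> 'p \<Rightarrow> nat" where
  "astar L mu th = (THE a. a \<in> arms L \<and> (\<forall>j\<in>arms L. j \<noteq> a \<longrightarrow> mu j th < mu a th))"

definition Aset :: "nat \<Rightarrow> 'p set \<Rightarrow> (nat \<Rightarrow> 'p \<Rightarrow> real) \<Rightarrow> nat set" where
  "Aset L Th mu = astar L mu ` Th"

definition Bset :: "nat \<Rightarrow> 'p set \<Rightarrow> (nat \<Rightarrow> 'p \<Rightarrow> real) \<Rightarrow> 'p \<Rightarrow> 'p set" where
  "Bset L Th mu tho = {th \<in> Th. astar L mu th \<noteq> astar L mu tho \<and>
        mu (astar L mu tho) tho = mu (astar L mu tho) th}"

definition Cset :: "nat \<Rightarrow> 'p set \<Rightarrow> (nat \<Rightarrow> 'p \<Rightarrow> real) \<Rightarrow> 'p \<Rightarrow> nat set" where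
  "Cset L Th mu tho = astar L mu ` Bset L Th mu tho"

text \<open>A reward realisation r j tau is the reward of the tau-th pull (tau >= 1) of arm j.
  A history is the list of arms pulled so far (in order).\<close>

definition npulls :: "nat list \<Rightarrow> nat \<Rightarrow> nat" where
  "npulls h j = count_list h j"

definition muhat :: "(nat \<Rightarrow> nat \<Rightarrow> real) \<Rightarrow> nat list \<Rightarrow> nat \<Rightarrow> real" where
  "muhat r h j = (\<Sum>tau = 1..npulls h j. r j tau) / real (npulls h j)"

definition episode_set :: "nat \<Rightarrow> 'p set \<Rightarrow> (nat \<Rightarrow> 'p \<Rightarrow> real) \<Rightarrow>
    (nat \<Rightarrow> nat \<Rightarrow> real) \<Rightarrow> nat list \<Rightarrow> nat \<Rightarrow> nat set" where
  "episode_set L Th mu r h k =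
     {astar L mu th | th. th \<in> Th \<and>
        (\<forall>j\<in>Aset L Th mu. \<bar>muhat r h j - mu j th\<bar> \<le> sqrt (3 * ln (real k) / real (npulls h j)))}"

primrec fp_hist :: "nat \<Rightarrow> 'p set \<Rightarrow> (nat \<Rightarrow> 'p \<Rightarrow> real) \<Rightarrow>
    (nat \<Rightarrow> nat \<Rightarrow> real) \<Rightarrow> nat \<Rightarrow> nat list" where
  "fp_hist L Th mu r 0 = sorted_list_of_set (Aset L Th mu)"
| "fp_hist L Th mu r (Suc k) =
     (let h = fp_hist L Th mu r k; S = episode_set L Th mu r h (Suc k)
      in h @ sorted_list_of_set (if S = {} then Aset L Th mu else S))"

text \<open>n_j(T): number of pulls of arm j among the first T pulls (pulls beyond T discarded).
  Every round has at least one pull, so fp_hist ... T has length > T.\<close>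
definition fp_count :: "nat \<Rightarrow> 'p set \<Rightarrow> (nat \<Rightarrow> 'p \<Rightarrow> real) \<Rightarrow>
    (nat \<Rightarrow> nat \<Rightarrow> real) \<Rightarrow> nat \<Rightarrow> nat \<Rightarrow> nat" where
  "fp_count L Th mu r T j = count_list (take T (fp_hist L Th mu r T)) j"

end

theory Submission
  imports Defs "HOL-Real_Asymp.Real_Asymp"
begin


lemma astar_in:
  assumes "\<forall>th\<in>Th. \<exists>a\<in>arms L. \<forall>j\<in>arms L. j \<noteq> a \<longrightarrow> mu j th < mu a th" "th \<in> Th"
  shows "astar L mu th \<in> arms L"
proof -
  obtain a where a: "a \<in> arms L" "\<forall>j\<in>arms L. j \<noteq> a \<longrightarrow> mu j th < mu a th"
    using assms by blast
  have "astar L mu th = a"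
    unfolding astar_def
  proof (rule the_equality)
    show "a \<in> arms L \<and> (\<forall>j\<in>arms L. j \<noteq> a \<longrightarrow> mu j th < mu a th)" using a by blast
  next
    fix b assume b: "b \<in> arms L \<and> (\<forall>j\<in>arms L. j \<noteq> b \<longrightarrow> mu j th < mu b th)"
    show "b = a"
    proof (rule ccontr)
      assume "b \<noteq> a"
      then show False using a b by force
    qed
  qed
  then show ?thesis using a by simp
qed

definition rnd :: "nat \<Rightarrow> 'p set \<Rightarrow> (nat \<Rightarrow> 'p \<Rightarrow> real) \<Rightarrow>
    (nat \<Rightarrow> nat \<Rightarrow> real) \<Rightarrow> nat \<Rightarrow> nat set" where
  "rnd L Th mu r k = (case k of 0 \<Rightarrow> Aset L Th mu | Suc m \<Rightarrow>
     (let S = episode_set L Th mu r (fp_hist L Th mu r m) (Suc m) in if S = {} then Aset L Th mu else S))"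

lemma hist_Suc: "fp_hist L Th mu r (Suc k) = fp_hist L Th mu r k @ sorted_list_of_set (rnd L Th mu r (Suc k))"
  by (simp add: rnd_def Let_def)

lemma episode_sub: "episode_set L Th mu r h k \<subseteq> Aset L Th mu"
  unfolding episode_set_def Aset_def by auto

lemma rnd_sub: "rnd L Th mu r k \<subseteq> Aset L Th mu"
  using episode_sub[of L Th mu r] by (auto simp: rnd_def Let_def split: nat.splits)

lemma count_distinct: "distinct xs \<Longrightarrow> count_list xs x = (if x \<in> set xs then 1 else 0)"
  by (induction xs) auto

lemma count_sorted: "finite S \<Longrightarrow> count_list (sorted_list_of_set S) x = (if x \<in> S then 1 else 0)"
  by (simp add: count_distinct)

lemma npulls_hist:
  assumes "finite Th"
  shows "npulls (fp_hist L Th mu r k) j = (\<Sum>m\<le>k. if j \<in> rnd L Th mu r m then 1 else 0)"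
proof -
  have fin: "finite (rnd L Th mu r m)" for m
    using rnd_sub[of L Th mu r m] assms unfolding Aset_def by (meson finite_imageI finite_subset)
  show ?thesis
  proof (induction k)
    case 0
    then show ?case using fin[of 0] by (simp add: npulls_def count_sorted rnd_def)
  next
    case (Suc k)
    then show ?case using fin[of "Suc k"] by (simp add: npulls_def hist_Suc count_sorted del: fp_hist.simps)
  qed
qed

lemma npulls_bounds:
  assumes "finite Th" "j \<in> Aset L Th mu"
  shows "1 \<le> npulls (fp_hist L Th mu r k) j" "npulls (fp_hist L Th mu r k) j \<le> Suc k"
proof -
  let ?f = "\<lambda>m. if j \<in> rnd L Th mu r m then 1 else (0::nat)"
  have "?f 0 \<le> (\<Sum>m\<le>k. ?f m)" by (rule member_le_sum) auto
  moreover have "?f 0 = 1" using assms by (simp add: rnd_def)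
  ultimately show "1 \<le> npulls (fp_hist L Th mu r k) j" using npulls_hist[OF assms(1)] by simp
  have "(\<Sum>m\<le>k. ?f m) \<le> (\<Sum>m\<le>k. 1)" by (rule sum_mono) auto
  then show "npulls (fp_hist L Th mu r k) j \<le> Suc k" using npulls_hist[OF assms(1)] by simp
qed

definition Bad :: "nat \<Rightarrow> 'p set \<Rightarrow> (nat \<Rightarrow> 'p \<Rightarrow> real) \<Rightarrow> 'p \<Rightarrow> (nat \<Rightarrow> nat \<Rightarrow> real) \<Rightarrow> nat \<Rightarrow> bool" where
  "Bad L Th mu tho r k \<longleftrightarrow> (\<exists>j\<in>Aset L Th mu. \<exists>n\<in>{1..k}.
     \<bar>(\<Sum>tau = 1..n. r j tau) / real n - mu j tho\<bar> > sqrt (3 * ln (real k) / real n))"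

lemma cons_tho:
  assumes "finite Th" "\<not> Bad L Th mu tho r (Suc m)" "j \<in> Aset L Th mu"
  shows "\<bar>muhat r (fp_hist L Th mu r m) j - mu j tho\<bar> \<le>
           sqrt (3 * ln (real (Suc m)) / real (npulls (fp_hist L Th mu r m) j))"
proof -
  let ?n = "npulls (fp_hist L Th mu r m) j"
  have "?n \<in> {1..Suc m}" using npulls_bounds[OF assms(1,3)] by auto
  then show ?thesis using assms(2,3) unfolding Bad_def muhat_def by (meson not_less)
qed

lemma tho_in_episode:
  assumes "finite Th" "tho \<in> Th" "\<not> Bad L Th mu tho r (Suc m)"
  shows "astar L mu tho \<in> episode_set L Th mu r (fp_hist L Th mu r m) (Suc m)"
  unfolding episode_set_def using cons_tho[OF assms(1,3)] assms(2) by blast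

lemma rnd_good:
  assumes "finite Th" "tho \<in> Th" "\<not> Bad L Th mu tho r (Suc m)"
  shows "rnd L Th mu r (Suc m) = episode_set L Th mu r (fp_hist L Th mu r m) (Suc m)"
    and "astar L mu tho \<in> rnd L Th mu r (Suc m)"
  using tho_in_episode[OF assms] by (auto simp: rnd_def Let_def)

lemma pulled_close:
  assumes "finite Th" "tho \<in> Th" "\<not> Bad L Th mu tho r (Suc m)" "i \<in> rnd L Th mu r (Suc m)"
  shows "\<exists>th\<in>Th. astar L mu th = i \<and> \<bar>mu (astar L mu tho) th - mu (astar L mu tho) tho\<bar>
     \<le> 2 * sqrt (3 * ln (real (Suc m)) / real (npulls (fp_hist L Th mu r m) (astar L mu tho)))"
proof -
  let ?a = "astar L mu tho"
  let ?h = "fp_hist L Th mu r m"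
  let ?s = "sqrt (3 * ln (real (Suc m)) / real (npulls ?h ?a))"
  have aA: "?a \<in> Aset L Th mu" using assms(2) by (simp add: Aset_def)
  obtain th where th: "th \<in> Th" "astar L mu th = i"
    "\<forall>j\<in>Aset L Th mu. \<bar>muhat r ?h j - mu j th\<bar> \<le> sqrt (3 * ln (real (Suc m)) / real (npulls ?h j))"
    using assms(4) rnd_good(1)[OF assms(1-3)] unfolding episode_set_def by force
  have 1: "\<bar>muhat r ?h ?a - mu ?a th\<bar> \<le> ?s" using th(3) aA by blast
  have 2: "\<bar>muhat r ?h ?a - mu ?a tho\<bar> \<le> ?s" using cons_tho[OF assms(1,3) aA] .
  have "\<bar>mu ?a th - mu ?a tho\<bar> \<le> 2 * ?s" using 1 2 by linarith
  then show ?thesis using th by blast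
qed

lemma pulls_lower:
  assumes "finite Th" "tho \<in> Th" "1 \<le> p" "\<forall>k\<in>{p..m}. \<not> Bad L Th mu tho r k"
  shows "m + 1 - p \<le> npulls (fp_hist L Th mu r m) (astar L mu tho)"
proof -
  let ?a = "astar L mu tho"
  let ?f = "\<lambda>k. if ?a \<in> rnd L Th mu r k then 1 else (0::nat)"
  have "\<forall>k\<in>{p..m}. ?f k = 1"
  proof
    fix k assume k: "k \<in> {p..m}"
    then obtain k' where "k = Suc k'" using assms(3) by (cases k) auto
    then show "?f k = 1" using rnd_good(2)[OF assms(1,2), where r=r and m=k'] assms(4) k by auto
  qed
  then have "card {p..m} = (\<Sum>k\<in>{p..m}. ?f k)" by simp
  also have "\<dots> \<le> (\<Sum>k\<le>m. ?f k)" by (rule sum_mono2) auto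
  finally show ?thesis using npulls_hist[OF assms(1)] by simp
qed

lemma key_det:
  assumes "finite Th" "tho \<in> Th" "0 < D"
    and D: "\<And>th. th \<in> Th \<Longrightarrow> astar L mu th = i \<Longrightarrow> D \<le> \<bar>mu (astar L mu tho) th - mu (astar L mu tho) tho\<bar>"
    and k: "2 \<le> k" "i \<in> rnd L Th mu r k"
    and good: "\<forall>k'\<in>{k div 2..k}. \<not> Bad L Th mu tho r k'"
  shows "D\<^sup>2 \<le> 24 * ln (real k) / real k"
proof -
  obtain m where m: "k = Suc m" using k by (cases k) auto
  let ?a = "astar L mu tho"
  let ?n = "npulls (fp_hist L Th mu r m) ?a"
  have "m + 1 - k div 2 \<le> ?n"
    using pulls_lower[OF assms(1,2), where p="k div 2" and m=m and r=r and L=L and mu=mu] good k m by auto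
  then have nge: "real k / 2 \<le> real ?n" using m by linarith
  have kpos: "0 < real k" using k by simp
  obtain th where th: "th \<in> Th" "astar L mu th = i"
     "\<bar>mu ?a th - mu ?a tho\<bar> \<le> 2 * sqrt (3 * ln (real k) / real ?n)"
    using pulled_close[OF assms(1,2), where r=r and m=m and i=i and L=L and mu=mu] good k m by auto
  have Dle: "D \<le> 2 * sqrt (3 * ln (real k) / real ?n)" using D[OF th(1,2)] th(3) by linarith
  have lnk: "0 \<le> ln (real k)" using k by simp
  have npos: "0 < real ?n" using nge kpos by linarith
  have "D\<^sup>2 \<le> (2 * sqrt (3 * ln (real k) / real ?n))\<^sup>2"
    using Dle assms(3) by (intro power_mono) auto
  also have "\<dots> = 12 * ln (real k) / real ?n"
    using lnk npos by (simp add: power_mult_distrib)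
  also have "\<dots> \<le> 12 * ln (real k) / (real k / 2)"
    using lnk nge kpos by (intro divide_left_mono) auto
  also have "\<dots> = 24 * ln (real k) / real k" by simp
  finally show ?thesis .
qed

lemma count_take_le: "count_list (take n xs) x \<le> count_list xs x"
proof -
  have "count_list xs x = count_list (take n xs) x + count_list (drop n xs) x"
    by (metis append_take_drop_id count_list_append)
  then show ?thesis by simp
qed

lemma count_bound:
  assumes finTh: "finite Th" and tho: "tho \<in> Th" and D0: "0 < D"
    and D: "\<And>th. th \<in> Th \<Longrightarrow> astar L mu th = i \<Longrightarrow> D \<le> \<bar>mu (astar L mu tho) th - mu (astar L mu tho) tho\<bar>"
    and K0: "2 \<le> K0" "\<forall>k\<ge>K0. 24 * ln (real k) / real k < D\<^sup>2"
  shows "real (fp_count L Th mu r T i) \<le> real K0 +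
     (\<Sum>k\<in>{K0..T}. \<Sum>k'\<in>{k div 2..k}. if Bad L Th mu tho r k' then 1 else (0::real))"
proof -
  define f where "f k = (if i \<in> rnd L Th mu r k then 1 else (0::real))" for k
  have "fp_count L Th mu r T i \<le> npulls (fp_hist L Th mu r T) i"
    unfolding fp_count_def npulls_def by (rule count_take_le)
  then have "real (fp_count L Th mu r T i) \<le> real (npulls (fp_hist L Th mu r T) i)" by simp
  also have "\<dots> = (\<Sum>k\<le>T. f k)" unfolding npulls_hist[OF finTh] f_def by (auto simp: of_nat_sum intro!: sum.cong)
  also have "\<dots> = (\<Sum>k\<in>{..T} \<inter> {..<K0}. f k) + (\<Sum>k\<in>{K0..T}. f k)"
  proof -
    have "{..T} = ({..T} \<inter> {..<K0}) \<union> {K0..T}" by auto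
    moreover have "({..T} \<inter> {..<K0}) \<inter> {K0..T} = {}" by auto
    ultimately show ?thesis by (metis sum.union_disjoint finite_Int finite_atLeastAtMost finite_atMost)
  qed
  also have "(\<Sum>k\<in>{..T} \<inter> {..<K0}. f k) \<le> (\<Sum>k\<in>{..T} \<inter> {..<K0}. 1)"
    by (intro sum_mono) (auto simp: f_def)
  also have "\<dots> \<le> real K0"
  proof -
    have "card ({..T} \<inter> {..<K0}) \<le> card {..<K0}" by (intro card_mono) auto
    then show ?thesis by simp
  qed
  also have "(\<Sum>k\<in>{K0..T}. f k) \<le> (\<Sum>k\<in>{K0..T}. \<Sum>k'\<in>{k div 2..k}. if Bad L Th mu tho r k' then 1 else (0::real))"
  proof (intro sum_mono)
    fix k assume k: "k \<in> {K0..T}"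
    show "f k \<le> (\<Sum>k'\<in>{k div 2..k}. if Bad L Th mu tho r k' then 1 else (0::real))"
    proof (cases "i \<in> rnd L Th mu r k")
      case False then show ?thesis by (simp add: f_def sum_nonneg)
    next
      case True
      have "\<not> (\<forall>k'\<in>{k div 2..k}. \<not> Bad L Th mu tho r k')"
      proof
        assume "\<forall>k'\<in>{k div 2..k}. \<not> Bad L Th mu tho r k'"
        then have "D\<^sup>2 \<le> 24 * ln (real k) / real k"
          using key_det[OF finTh tho D0, where L=L and mu=mu and i=i and k=k and r=r] D True k K0 by auto
        then show False using K0 k by force
      qed
      then obtain k' where k': "k' \<in> {k div 2..k}" "Bad L Th mu tho r k'" by blast
      have "(if Bad L Th mu tho r k' then 1 else (0::real)) \<le> (\<Sum>k'\<in>{k div 2..k}. if Bad L Th mu tho r k' then 1 else (0::real))"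
        by (rule member_le_sum) (use k' in auto)
      then show ?thesis using k' True by (simp add: f_def)
    qed
  qed
  finally show ?thesis by simp
qed



lemma (in prob_space) indep_sets_reindex:
  assumes "indep_sets G (f ` J)" "inj_on f J"
  shows "indep_sets (\<lambda>j. G (f j)) J"
  unfolding indep_sets_def
proof (intro conjI ballI allI impI)
  fix j assume "j \<in> J" then show "G (f j) \<subseteq> events" using assms(1) unfolding indep_sets_def by auto
next
  fix K A assume K: "K \<subseteq> J" "K \<noteq> {}" "finite K" and A: "A \<in> Pi K (\<lambda>j. G (f j))"
  have injK: "inj_on f K" using assms(2) K(1) inj_on_subset by blast
  define B where "B y = A (the_inv_into K f y)" for y
  have Bf: "B (f j) = A j" if "j \<in> K" for j using injK that by (simp add: B_def the_inv_into_f_f)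
  have "B \<in> Pi (f ` K) G" using A Bf by auto
  moreover have "f ` K \<subseteq> f ` J" "f ` K \<noteq> {}" "finite (f ` K)" using K by auto
  ultimately have "prob (\<Inter>y\<in>f ` K. B y) = (\<Prod>y\<in>f ` K. prob (B y))"
    using assms(1) unfolding indep_sets_def by blast
  moreover have "(\<Inter>y\<in>f ` K. B y) = (\<Inter>j\<in>K. A j)" using Bf by auto
  moreover have "(\<Prod>y\<in>f ` K. prob (B y)) = (\<Prod>j\<in>K. prob (A j))"
    using injK Bf by (simp add: prod.reindex)
  ultimately show "prob (\<Inter>j\<in>K. A j) = (\<Prod>j\<in>K. prob (A j))" by simp
qed

lemma (in prob_space) indep_vars_reindex:
  assumes "indep_vars M' X (f ` J)" "inj_on f J"
  shows "indep_vars (\<lambda>j. M' (f j)) (\<lambda>j. X (f j)) J"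
  using assms indep_sets_reindex[of "\<lambda>i. {X i -` A \<inter> space M | A. A \<in> sets (M' i)}" f J]
  unfolding indep_vars_def2 by auto

lemma hoeff_arm:
  fixes Y :: "nat \<Rightarrow> 'w \<Rightarrow> real" and Q :: "real measure"
  assumes M: "prob_space M"
    and ind: "prob_space.indep_vars M (\<lambda>_. borel) Y {1..n}"
    and dist: "\<forall>tau\<in>{1..n}. distr M borel (Y tau) = Q"
    and Q: "prob_space Q" "sets Q = sets borel" "emeasure Q {0..1} = 1" "(\<integral>x. x \<partial>Q) = m"
    and n: "1 \<le> n" and eps: "0 \<le> eps"
  shows "measure M {w\<in>space M. \<bar>(\<Sum>tau = 1..n. Y tau w) / real n - m\<bar> \<ge> eps} \<le> 2 * exp (- 2 * real n * eps\<^sup>2)"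
proof -
  interpret prob_space M by fact
  have rv: "random_variable borel (Y 1)" using ind n unfolding indep_vars_def by auto
  have d1: "distr M borel (Y 1) = Q" using dist n by auto
  have AEQ: "AE x in Q. x \<in> {0..1}"
  proof -
    interpret Qp: prob_space Q by fact
    have "{0..1::real} \<in> sets Q" using Q(2) by simp
    then show ?thesis using Q(3) by (intro Qp.AE_prob_1) (simp add: Qp.emeasure_eq_measure)
  qed
  have AEY: "AE x in M. Y 1 x \<in> {0..1}"
  proof -
    have "AE x in distr M borel (Y 1). x \<in> {0..1}" using AEQ d1 by (simp only:)
    then show ?thesis using rv by (subst (asm) AE_distr_iff) auto
  qed
  interpret H: Hoeffding_ineq_iid M "{1..n}" Y "Y 1" 0 1 "expectation (Y 1)"
  proof unfold_locales
    show "finite {1..n}" by simp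
    show "indep_vars (\<lambda>_. borel) Y {1..n}" by fact
    show "distr M borel (Y i) = distr M borel (Y 1)" if "i \<in> {1..n}" for i
      using dist that n by auto
    show "random_variable borel (Y 1)" by fact
    show "AE x in M. Y 1 x \<in> {0..1}" by fact
  qed simp
  have ex: "expectation (Y 1) = m"
  proof -
    have "expectation (Y 1) = lebesgue_integral (distr M borel (Y 1)) (\<lambda>x. x)"
      using rv by (intro integral_distr [symmetric]) auto
    then show ?thesis using d1 Q(4) by simp
  qed
  have "prob {x\<in>space M. \<bar>(\<Sum>i\<in>{1..n}. Y i x) / real (card {1..n}) - expectation (Y 1)\<bar> \<ge> eps} \<le>
         2 * exp (-2 * real (card {1..n}) * eps\<^sup>2 / (1 - 0)\<^sup>2)"
    by (rule H.Hoeffding_ineq_abs_ge') (use eps n in auto)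
  then show ?thesis using ex by simp
qed

lemma bad_prob:
  fixes X :: "nat \<Rightarrow> nat \<Rightarrow> 'w \<Rightarrow> real" and P :: "nat \<Rightarrow> 'p \<Rightarrow> real measure"
  assumes M: "prob_space M" and finTh: "finite Th" and tho: "tho \<in> Th"
    and assumption1: "\<forall>th\<in>Th. \<exists>a\<in>arms L. \<forall>j\<in>arms L. j \<noteq> a \<longrightarrow> mu j th < mu a th"
    and PP: "\<forall>j\<in>arms L. \<forall>th\<in>Th. prob_space (P j th) \<and> sets (P j th) = sets borel
            \<and> emeasure (P j th) {0..1} = 1 \<and> (\<integral>x. x \<partial>(P j th)) = mu j th"
    and ind: "prob_space.indep_vars M (\<lambda>_. borel) (\<lambda>(j, tau). X j tau) (arms L \<times> {1..})"
    and dist: "\<forall>j\<in>arms L. \<forall>tau\<ge>1. distr M borel (X j tau) = P j tho"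
    and k: "1 \<le> k"
  shows "{w\<in>space M. Bad L Th mu tho (\<lambda>j tau. X j tau w) k} \<in> sets M"
    "measure M {w\<in>space M. Bad L Th mu tho (\<lambda>j tau. X j tau w) k} \<le> 2 * real (card (Aset L Th mu)) / real k ^ 5"
proof -
  interpret prob_space M by fact
  let ?A = "Aset L Th mu"
  have Aarms: "?A \<subseteq> arms L" using astar_in[OF assumption1] by (auto simp: Aset_def)
  have finA: "finite ?A" using finTh by (simp add: Aset_def)
  have meas: "X j tau \<in> borel_measurable M" if "j \<in> arms L" "1 \<le> tau" for j tau
    using ind that unfolding indep_vars_def by force
  define E where "E j n = {w\<in>space M. \<bar>(\<Sum>tau = 1..n. X j tau w) / real n - mu j tho\<bar> > sqrt (3 * ln (real k) / real n)}" for j n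
  define F where "F j n = {w\<in>space M. \<bar>(\<Sum>tau = 1..n. X j tau w) / real n - mu j tho\<bar> \<ge> sqrt (3 * ln (real k) / real n)}" for j n
  have fm: "(\<lambda>w. \<bar>(\<Sum>tau = 1..n. X j tau w) / real n - mu j tho\<bar>) \<in> borel_measurable M" if "j \<in> ?A" for j n
  proof -
    have "(\<lambda>w. (\<Sum>tau = 1..n. X j tau w)) \<in> borel_measurable M"
      using meas Aarms that by (intro borel_measurable_sum) auto
    then show ?thesis by measurable
  qed
  have Esets: "E j n \<in> sets M" if "j \<in> ?A" for j n
    using fm[OF that, of n] unfolding E_def by measurable
  have Fsets: "F j n \<in> sets M" if "j \<in> ?A" for j n
    using fm[OF that, of n] unfolding F_def by measurable
  have eq: "{w\<in>space M. Bad L Th mu tho (\<lambda>j tau. X j tau w) k} = (\<Union>j\<in>?A. \<Union>n\<in>{1..k}. E j n)"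
    unfolding Bad_def E_def by auto
  show "{w\<in>space M. Bad L Th mu tho (\<lambda>j tau. X j tau w) k} \<in> sets M"
    unfolding eq using finA Esets by auto
  have bnd: "measure M (E j n) \<le> 2 / real k ^ 6" if j: "j \<in> ?A" and n: "n \<in> {1..k}" for j n
  proof -
    have jL: "j \<in> arms L" using j Aarms by auto
    have "prob_space.indep_vars M (\<lambda>_. borel) (\<lambda>(j, tau). X j tau) (Pair j ` {1..n})"
      by (rule indep_vars_subset[OF ind]) (use jL in auto)
    then have "indep_vars (\<lambda>_. borel) (\<lambda>tau. (\<lambda>(j, tau). X j tau) (Pair j tau)) {1..n}"
      by (rule indep_vars_reindex[where f="Pair j"]) (auto simp: inj_on_def)
    then have ind1: "indep_vars (\<lambda>_. borel) (X j) {1..n}" by simp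
    have PQ: "prob_space (P j tho)" "sets (P j tho) = sets borel" "emeasure (P j tho) {0..1} = 1"
       "(\<integral>x. x \<partial>(P j tho)) = mu j tho" using PP jL tho by auto
    have npos: "0 < real n" using n by auto
    have lnk: "0 \<le> ln (real k)" using k by simp
    have "measure M (E j n) \<le> measure M (F j n)"
      using Fsets[OF j] unfolding E_def F_def by (intro finite_measure_mono) auto
    also have "\<dots> \<le> 2 * exp (- 2 * real n * (sqrt (3 * ln (real k) / real n))\<^sup>2)"
      unfolding F_def
      by (rule hoeff_arm[OF M ind1 _ PQ]) (use dist jL n in auto)
    also have "(sqrt (3 * ln (real k) / real n))\<^sup>2 = 3 * ln (real k) / real n"
      using lnk npos by simp
    also have "- 2 * real n * (3 * ln (real k) / real n) = - (real 6 * ln (real k))"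
      using npos by (simp add: field_simps)
    also have "exp (- (real 6 * ln (real k))) = 1 / real k ^ 6"
      using k by (simp add: exp_minus exp_of_nat_mult inverse_eq_divide del: of_nat_numeral)
    finally show ?thesis by simp
  qed
  have "measure M (\<Union>j\<in>?A. \<Union>n\<in>{1..k}. E j n) \<le> (\<Sum>j\<in>?A. measure M (\<Union>n\<in>{1..k}. E j n))"
    using finA Esets by (intro measure_UNION_le) auto
  also have "\<dots> \<le> (\<Sum>j\<in>?A. \<Sum>n\<in>{1..k}. measure M (E j n))"
    using Esets by (intro sum_mono measure_UNION_le) auto
  also have "\<dots> \<le> (\<Sum>j\<in>?A. \<Sum>n\<in>{1..k}. 2 / real k ^ 6)"
    using bnd by (intro sum_mono) auto
  also have "\<dots> = real (card ?A) * (real k * (2 / real k ^ 6))" by simp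
  also have "\<dots> = 2 * real (card ?A) / real k ^ 5"
    using k by (simp add: field_simps power_eq_if)
  finally show "measure M {w\<in>space M. Bad L Th mu tho (\<lambda>j tau. X j tau w) k} \<le> 2 * real (card ?A) / real k ^ 5"
    unfolding eq .
qed



lemma arith1:
  assumes "2 \<le> k" "k div 2 \<le> k'" "0 \<le> c"
  shows "2 * c / real k' ^ 5 \<le> 2048 * c / real k ^ 5"
proof -
  have "real k \<le> 4 * real k'" using assms(1,2) by linarith
  then have "real k ^ 5 \<le> (4 * real k') ^ 5" by (intro power_mono) auto
  then have h: "real k ^ 5 \<le> 1024 * real k' ^ 5" by (simp add: power_mult_distrib)
  have kp: "0 < real k' ^ 5" using assms by auto
  have kp2: "0 < real k ^ 5" using assms by auto
  have "2 * c / real k' ^ 5 = 2 * c * 1024 / (1024 * real k' ^ 5)" by simp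
  also have "\<dots> \<le> 2 * c * 1024 / real k ^ 5"
    using h kp kp2 assms(3) by (intro divide_left_mono) auto
  finally show ?thesis by simp
qed

lemma arith2:
  assumes "2 \<le> k" "0 \<le> c"
  shows "real (Suc k - k div 2) * (2048 * c / real k ^ 5) \<le> 4096 * c * inverse (real k ^ 2)"
proof -
  have kp: "1 \<le> real k" using assms by auto
  have "real (Suc k - k div 2) \<le> 2 * real k" using assms by linarith
  then have "real (Suc k - k div 2) * (2048 * c / real k ^ 5) \<le> 2 * real k * (2048 * c / real k ^ 5)"
    using assms kp by (intro mult_right_mono) auto
  also have "\<dots> = 4096 * c / real k ^ 4" using kp by (simp add: field_simps power_eq_if)
  also have "\<dots> \<le> 4096 * c / real k ^ 2"
    using kp assms by (intro divide_left_mono) (auto intro!: power_increasing mult_pos_pos)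
  finally show ?thesis by (simp add: inverse_eq_divide)
qed

theorem proposition1:
  fixes L :: nat and Th :: "'p set" and mu :: "nat \<Rightarrow> 'p \<Rightarrow> real"
    and tho :: 'p and i :: nat
  assumes finTh: "finite Th"
    and tho: "tho \<in> Th"
    and assumption1: "\<forall>th\<in>Th. \<exists>a\<in>arms L. \<forall>j\<in>arms L. j \<noteq> a \<longrightarrow> mu j th < mu a th"
    and i_in: "i \<in> Aset L Th mu - Cset L Th mu tho"
    and i_ne: "i \<noteq> astar L mu tho"
  shows "\<exists>C::real. \<forall>(M::'w measure) (P :: nat \<Rightarrow> 'p \<Rightarrow> real measure)
            (X :: nat \<Rightarrow> nat \<Rightarrow> 'w \<Rightarrow> real) (T::nat).
      prob_space M
      \<and> (\<forall>j\<in>arms L. \<forall>th\<in>Th. prob_space (P j th) \<and> sets (P j th) = sets borel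
            \<and> emeasure (P j th) {0..1} = 1 \<and> (\<integral>x. x \<partial>(P j th)) = mu j th)
      \<and> prob_space.indep_vars M (\<lambda>_. borel) (\<lambda>(j, tau). X j tau) (arms L \<times> {1..})
      \<and> (\<forall>j\<in>arms L. \<forall>tau\<ge>1. distr M borel (X j tau) = P j tho)
      \<longrightarrow> (\<integral>w. real (fp_count L Th mu (\<lambda>j tau. X j tau w) T i) \<partial>M) \<le> C"
proof -
  let ?a = "astar L mu tho"
  let ?A = "Aset L Th mu"
  define S where "S = (\<lambda>th. \<bar>mu ?a th - mu ?a tho\<bar>) ` {th \<in> Th. astar L mu th = i}"
  define D where "D = Min (insert 1 S)"
  have finS: "finite S" using finTh unfolding S_def by auto
  have Spos: "\<forall>x\<in>S. 0 < x"
  proof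
    fix x assume "x \<in> S"
    then obtain th where th: "th \<in> Th" "astar L mu th = i" "x = \<bar>mu ?a th - mu ?a tho\<bar>"
      unfolding S_def by auto
    have "th \<notin> Bset L Th mu tho"
      using i_in th(2) unfolding Cset_def by auto
    then have "mu ?a tho \<noteq> mu ?a th" using th i_ne unfolding Bset_def by auto
    then show "0 < x" using th by auto
  qed
  have D0: "0 < D" unfolding D_def using finS Spos by auto
  have Dle: "D \<le> \<bar>mu ?a th - mu ?a tho\<bar>" if "th \<in> Th" "astar L mu th = i" for th
    unfolding D_def using finS that by (intro Min_le) (auto simp: S_def)
  have lim: "(\<lambda>k::nat. 24 * ln (real k) / real k) \<longlonglongrightarrow> 0" by real_asymp
  have "eventually (\<lambda>k. 24 * ln (real k) / real k < D\<^sup>2) sequentially"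
    using order_tendstoD(2)[OF lim] D0 by auto
  then obtain N where N: "\<forall>k\<ge>N. 24 * ln (real k) / real k < D\<^sup>2"
    unfolding eventually_sequentially by blast
  define K0 where "K0 = max N 2"
  have K0: "2 \<le> K0" "\<forall>k\<ge>K0. 24 * ln (real k) / real k < D\<^sup>2" using N unfolding K0_def by auto
  define Z where "Z = suminf (\<lambda>k::nat. inverse (real k ^ 2))"
  have summ: "summable (\<lambda>k::nat. inverse (real k ^ 2))" by (rule inverse_power_summable) simp
  define c where "c = 2 * real (card ?A)"
  have c0: "0 \<le> c" unfolding c_def by simp
  show ?thesis
  proof (intro exI allI impI)
    fix M :: "'w measure" and P :: "nat \<Rightarrow> 'p \<Rightarrow> real measure" and X :: "nat \<Rightarrow> nat \<Rightarrow> 'w \<Rightarrow> real" and T :: nat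
    assume H: "prob_space M
      \<and> (\<forall>j\<in>arms L. \<forall>th\<in>Th. prob_space (P j th) \<and> sets (P j th) = sets borel
            \<and> emeasure (P j th) {0..1} = 1 \<and> (\<integral>x. x \<partial>(P j th)) = mu j th)
      \<and> prob_space.indep_vars M (\<lambda>_. borel) (\<lambda>(j, tau). X j tau) (arms L \<times> {1..})
      \<and> (\<forall>j\<in>arms L. \<forall>tau\<ge>1. distr M borel (X j tau) = P j tho)"
    then have PM: "prob_space M" by blast
    interpret prob_space M by (rule PM)
    define BS where "BS k = {w\<in>space M. Bad L Th mu tho (\<lambda>j tau. X j tau w) k}" for k
    have BSs: "BS k \<in> sets M" and BSm: "measure M (BS k) \<le> c / real k ^ 5" if "1 \<le> k" for k
      using bad_prob[OF PM finTh tho assumption1, where P=P and X=X and k=k] H that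
      unfolding BS_def c_def by auto
    define g where "g w = real K0 + (\<Sum>k\<in>{K0..T}. \<Sum>k'\<in>{k div 2..k}. indicator (BS k') w)" for w
    have kk: "1 \<le> k'" if "k \<in> {K0..T}" "k' \<in> {k div 2..k}" for k k'
      using that K0 by auto
    have iind: "integrable M (indicator (BS k') :: 'w \<Rightarrow> real)" if "1 \<le> k'" for k'
      using BSs[OF that] by (intro integrable_real_indicator) (auto simp: emeasure_eq_measure)
    have iinner: "integrable M (\<lambda>w. \<Sum>k'\<in>{k div 2..k}. indicator (BS k') w :: real)" if "k \<in> {K0..T}" for k
      by (intro Bochner_Integration.integrable_sum iind kk[OF that]) 
    have iouter: "integrable M (\<lambda>w. \<Sum>k\<in>{K0..T}. \<Sum>k'\<in>{k div 2..k}. indicator (BS k') w :: real)"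
      by (intro Bochner_Integration.integrable_sum iinner)
    have gint: "integrable M g"
      unfolding g_def by (rule Bochner_Integration.integrable_add[OF _ iouter]) simp
    have fg: "real (fp_count L Th mu (\<lambda>j tau. X j tau w) T i) \<le> g w" if w: "w \<in> space M" for w
    proof -
      have "real (fp_count L Th mu (\<lambda>j tau. X j tau w) T i) \<le> real K0 +
         (\<Sum>k\<in>{K0..T}. \<Sum>k'\<in>{k div 2..k}. if Bad L Th mu tho (\<lambda>j tau. X j tau w) k' then 1 else (0::real))"
        by (rule count_bound[OF finTh tho D0, where L=L and mu=mu and i=i]) (use Dle K0 in auto)
      also have "\<dots> = g w" unfolding g_def BS_def using w
        by (intro arg_cong2[where f="(+)"] refl sum.cong) (auto simp: indicator_def)
      finally show ?thesis .
    qed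
    have intg: "integral\<^sup>L M g = real K0 + (\<Sum>k\<in>{K0..T}. \<Sum>k'\<in>{k div 2..k}. measure M (BS k'))"
    proof -
      have "integral\<^sup>L M g = real K0 + (\<integral>w. (\<Sum>k\<in>{K0..T}. \<Sum>k'\<in>{k div 2..k}. indicator (BS k') w) \<partial>M)"
        unfolding g_def by (subst Bochner_Integration.integral_add[OF _ iouter]) (auto simp: prob_space)
      also have "\<dots> = real K0 + (\<Sum>k\<in>{K0..T}. (\<integral>w. (\<Sum>k'\<in>{k div 2..k}. indicator (BS k') w) \<partial>M))"
        by (subst Bochner_Integration.integral_sum[OF iinner]) auto
      also have "\<dots> = real K0 + (\<Sum>k\<in>{K0..T}. \<Sum>k'\<in>{k div 2..k}. integral\<^sup>L M (indicator (BS k')))"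
        by (intro arg_cong2[where f="(+)"] refl sum.cong Bochner_Integration.integral_sum iind kk) auto
      finally have "integral\<^sup>L M g = real K0 + (\<Sum>k\<in>{K0..T}. \<Sum>k'\<in>{k div 2..k}. integral\<^sup>L M (indicator (BS k')))" .
      moreover have "integral\<^sup>L M (indicator (BS k')) = measure M (BS k')" for k'
        unfolding BS_def by (simp add: Int_absorb2)
      ultimately show ?thesis by simp
    qed
    have "(\<Sum>k\<in>{K0..T}. \<Sum>k'\<in>{k div 2..k}. measure M (BS k')) \<le> (\<Sum>k\<in>{K0..T}. 4096 * c * inverse (real k ^ 2))"
    proof (intro sum_mono)
      fix k assume k: "k \<in> {K0..T}"
      have "(\<Sum>k'\<in>{k div 2..k}. measure M (BS k')) \<le> (\<Sum>k'\<in>{k div 2..k}. 2048 * c / real k ^ 5)"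
      proof (intro sum_mono)
        fix k' assume k': "k' \<in> {k div 2..k}"
        have "measure M (BS k') \<le> c / real k' ^ 5" using BSm kk[OF k k'] by blast
        also have "\<dots> \<le> 2048 * c / real k ^ 5"
        proof -
          have "c / real k' ^ 5 \<le> 1024 * c / real k ^ 5" using arith1[of k k' "c/2"] k k' K0 c0 by auto
          also have "\<dots> \<le> 2048 * c / real k ^ 5" using c0 by (intro divide_right_mono) auto
          finally show ?thesis .
        qed
        finally show "measure M (BS k') \<le> 2048 * c / real k ^ 5" .
      qed
      also have "\<dots> = real (Suc k - k div 2) * (2048 * c / real k ^ 5)" by simp
      also have "\<dots> \<le> 4096 * c * inverse (real k ^ 2)" using arith2[OF _ c0, of k] k K0 by auto
      finally show "(\<Sum>k'\<in>{k div 2..k}. measure M (BS k')) \<le> 4096 * c * inverse (real k ^ 2)" .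
    qed
    also have "\<dots> = 4096 * c * (\<Sum>k\<in>{K0..T}. inverse (real k ^ 2))" by (simp add: sum_distrib_left)
    also have "\<dots> \<le> 4096 * c * Z"
      unfolding Z_def using c0 by (intro mult_left_mono sum_le_suminf[OF summ]) auto
    finally have gb: "integral\<^sup>L M g \<le> real K0 + 4096 * c * Z" using intg by simp
    have Z0: "0 \<le> Z" unfolding Z_def by (intro suminf_nonneg[OF summ]) auto
    show "(\<integral>w. real (fp_count L Th mu (\<lambda>j tau. X j tau w) T i) \<partial>M) \<le> real K0 + 4096 * c * Z"
    proof (cases "integrable M (\<lambda>w. real (fp_count L Th mu (\<lambda>j tau. X j tau w) T i))")
      case True
      have "(\<integral>w. real (fp_count L Th mu (\<lambda>j tau. X j tau w) T i) \<partial>M) \<le> integral\<^sup>L M g"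
        by (rule integral_mono[OF True gint fg])
      then show ?thesis using gb by linarith
    next
      case False
      then show ?thesis using Z0 c0 by (simp add: not_integrable_integral_eq)
    qed
  qed
qed


end
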